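(* Let $d,l,m\geq 1$ be integers, and fix arbitrary norms $\|\cdot\|$ on the real vector space $H(d)$ of $d\times d$ Hermitian matrices and on the real vector space $M_{lm}(\mathbb{R})$ of real $l\times m$ matrices. Let $\mathcal{Q}=\{P_1,\dots,P_l\}$ be a measurement scheme consisting of $l$ POVMs, each with outcome set $\{1,\dots,m\}$, and suppose $\mathcal{Q}$ determines any pure state among all states. Then there exists $\epsilon>0$ such that every measurement scheme $\mathcal{Q}'=\{P'_1,\dots,P'_l\}$ (of $l$ POVMs with outcome set $\{1,\dots,m\}$) which is $\epsilon$-close to $\mathcal{Q}$ also determines any pure state among all states.
   Context: A POVM with outcome set $\{1,\dots,m\}$ is a map $j\mapsto P(j)$ into $H(d)$ with $P(j)\geq 0$ for all $j$ and $\sum_{j=1}^m P(j)=\mathbb{1}$. A measurement scheme $\mathcal{Q}=\{P_1,\dots,P_l\}$ induces the real-linear map $M_{\mathcal{Q}}:H(d)\to M_{lm}(\mathbb{R})$, $M_{\mathcal{Q}}(X)_{i,j}=\mathrm{tr}(X P_i(j))$. $\mathcal{Q}$ determines any pure state among all states if for every pure state $\sigma=|\psi\rangle\langle\psi|$ and every state (density matrix) $\varrho$, $M_{\mathcal{Q}}(\sigma)=M_{\mathcal{Q}}(\varrho)$ implies $\varrho=\sigma$. Two measurement schemes $\mathcal{Q},\mathcal{Q}'$ are $\epsilon$-close if $\|M_{\mathcal{Q}}-M_{\mathcal{Q}'}\|_\infty<\epsilon$, where $\|\cdot\|_\infty$ is the operator norm of linear maps $H(d)\to M_{lm}(\mathbb{R})$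 with respect to the fixed norms. *)

theory Defs
  imports "HOL-Analysis.Analysis"
begin

text \<open>d x d complex matrices are \<open>complex^'d^'d\<close>; d = CARD('d).
  Real l x m matrices are \<open>real^'m^'l\<close>; l = CARD('l), m = CARD('m).\<close>

definition hermitian :: "complex^'d^'d \<Rightarrow> bool" where
  "hermitian A \<longleftrightarrow> (\<forall>i j. A $ i $ j = cnj (A $ j $ i))"

definition psd :: "complex^'d^'d \<Rightarrow> bool" where
  "psd A \<longleftrightarrow> hermitian A \<and>
     (\<forall>v::complex^'d. 0 \<le> Re (\<Sum>i\<in>UNIV. \<Sum>j\<in>UNIV. cnj (v $ i) * A $ i $ j * v $ j))"

definition mtrace :: "complex^'d^'d \<Rightarrow> complex" where
  "mtrace A = (\<Sum>i\<in>UNIV. A $ i $ i)"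

definition density_matrix :: "complex^'d^'d \<Rightarrow> bool" where
  "density_matrix \<rho> \<longleftrightarrow> psd \<rho> \<and> mtrace \<rho> = 1"

definition pure_state :: "complex^'d^'d \<Rightarrow> bool" where
  "pure_state \<sigma> \<longleftrightarrow> (\<exists>\<psi>::complex^'d. (\<Sum>i\<in>UNIV. (cmod (\<psi> $ i))\<^sup>2) = 1 \<and>
      \<sigma> = (\<chi> i j. \<psi> $ i * cnj (\<psi> $ j)))"

definition povm :: "('m::finite \<Rightarrow> complex^'d^'d) \<Rightarrow> bool" where
  "povm P \<longleftrightarrow> (\<forall>j. psd (P j)) \<and> (\<Sum>j\<in>UNIV. P j) = mat 1"

definition scheme :: "('l::finite \<Rightarrow> 'm::finite \<Rightarrow> complex^'d^'d) \<Rightarrow> bool" where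
  "scheme Q \<longleftrightarrow> (\<forall>i. povm (Q i))"

definition meas_map :: "('l::finite \<Rightarrow> 'm::finite \<Rightarrow> complex^'d^'d) \<Rightarrow> complex^'d^'d \<Rightarrow> real^'m^'l" where
  "meas_map Q X = (\<chi> i j. Re (mtrace (X ** Q i j)))"

definition determines_pure :: "('l::finite \<Rightarrow> 'm::finite \<Rightarrow> complex^'d^'d) \<Rightarrow> bool" where
  "determines_pure Q \<longleftrightarrow> (\<forall>\<sigma> \<rho>. pure_state \<sigma> \<longrightarrow> density_matrix \<rho> \<longrightarrow>
      meas_map Q \<sigma> = meas_map Q \<rho> \<longrightarrow> \<rho> = \<sigma>)"

definition herm_norm :: "(complex^'d^'d \<Rightarrow> real) \<Rightarrow> bool" where
  "herm_norm N \<longleftrightarrow> (\<forall>X Y. hermitian X \<longrightarrow> hermitian Y \<longrightarrow> N (X + Y) \<le> N X + N Y) \<and>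
     (\<forall>c X. hermitian X \<longrightarrow> N (c *\<^sub>R X) = \<bar>c\<bar> * N X) \<and>
     (\<forall>X. hermitian X \<longrightarrow> 0 \<le> N X) \<and>
     (\<forall>X. hermitian X \<longrightarrow> N X = 0 \<longrightarrow> X = 0)"

definition vec_norm :: "('a::real_vector \<Rightarrow> real) \<Rightarrow> bool" where
  "vec_norm N \<longleftrightarrow> (\<forall>x y. N (x + y) \<le> N x + N y) \<and>
     (\<forall>c x. N (c *\<^sub>R x) = \<bar>c\<bar> * N x) \<and> (\<forall>x. 0 \<le> N x) \<and> (\<forall>x. N x = 0 \<longrightarrow> x = 0)"

definition op_norm :: "(complex^'d^'d \<Rightarrow> real) \<Rightarrow> ('b \<Rightarrow> real) \<Rightarrow> (complex^'d^'d \<Rightarrow> 'b) \<Rightarrow> real" where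
  "op_norm N1 N2 T = Sup {N2 (T X) | X. hermitian X \<and> N1 X \<le> 1}"

end

theory Submission
  imports Defs
begin


definition inn :: "complex^'d \<Rightarrow> complex^'d \<Rightarrow> complex" where
  "inn u v = (\<Sum>i\<in>UNIV. cnj (u$i) * v$i)"

definition B :: "complex^'d^'d \<Rightarrow> complex^'d \<Rightarrow> complex^'d \<Rightarrow> complex" where
  "B X u v = (\<Sum>i\<in>UNIV. \<Sum>j\<in>UNIV. cnj (u $ i) * X $ i $ j * v $ j)"

definition lc :: "complex \<Rightarrow> complex^'d \<Rightarrow> complex \<Rightarrow> complex^'d \<Rightarrow> complex^'d" where
  "lc a u b w = (\<chi> i. a * u$i + b * w$i)"

lemma B_lc_right: "B X v (lc a u b w) = a * B X v u + b * B X v w"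
  unfolding B_def lc_def by (simp add: algebra_simps sum.distrib sum_distrib_left)

lemma B_lc_left: "B X (lc a u b w) v = cnj a * B X u v + cnj b * B X w v"
  unfolding B_def lc_def by (simp add: algebra_simps sum.distrib sum_distrib_left)

lemma inn_lc_right: "inn v (lc a u b w) = a * inn v u + b * inn v w"
  unfolding inn_def lc_def by (simp add: algebra_simps sum.distrib sum_distrib_left)

lemma inn_lc_left: "inn (lc a u b w) v = cnj a * inn u v + cnj b * inn w v"
  unfolding inn_def lc_def by (simp add: algebra_simps sum.distrib sum_distrib_left)

lemma B_expand: "B X (lc a u b w) (lc a u b w) =
   cnj a * a * B X u u + cnj a * b * B X u w + cnj b * a * B X w u + cnj b * b * B X w w"
  by (simp add: B_lc_left B_lc_right algebra_simps)

lemma inn_expand: "inn (lc a u b w) (lc a u b w) =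
   cnj a * a * inn u u + cnj a * b * inn u w + cnj b * a * inn w u + cnj b * b * inn w w"
  by (simp add: inn_lc_left inn_lc_right algebra_simps)

lemma B_add: "B (X + Y) u v = B X u v + B Y u v"
  unfolding B_def by (simp add: algebra_simps sum.distrib)

lemma B_scaleR: "B (c *\<^sub>R X) u v = of_real c * B X u v"
  unfolding B_def vector_scaleR_component by (simp add: sum_distrib_left scaleR_conv_of_real mult.assoc mult.left_commute)

lemma B_vscaleR: "B X (c *\<^sub>R u) (c *\<^sub>R u) = of_real (c^2) * B X u u"
  unfolding B_def vector_scaleR_component by (simp add: sum_distrib_left scaleR_conv_of_real algebra_simps power2_eq_square)

lemma B_diff: "B (X - Y) u v = B X u v - B Y u v"
  unfolding B_def by (simp add: algebra_simps sum_subtractf)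

lemma B_mat1: "B (mat 1) u v = inn u v"
  unfolding B_def inn_def mat_def
  by (simp add: if_distrib if_distribR cong: if_cong)

lemma herm_cnj: assumes "hermitian X" shows "cnj (X$i$j) = X$j$i"
proof -
  have "X$i$j = cnj (X$j$i)" using assms unfolding hermitian_def by blast
  then show ?thesis by simp
qed

lemma B_herm: assumes "hermitian X" shows "B X w u = cnj (B X u w)"
proof -
  have hX: "\<And>i j. cnj (X$i$j) = X$j$i" using herm_cnj[OF assms] .
  have "B X w u = (\<Sum>j\<in>UNIV. \<Sum>i\<in>UNIV. cnj (w$i) * X$i$j * u$j)" unfolding B_def by (rule sum.swap)
  also have "\<dots> = cnj (B X u w)" unfolding B_def by (simp add: hX mult.commute mult.left_commute)
  finally show ?thesis .
qed

lemma inn_sym: "inn w u = cnj (inn u w)"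
  unfolding inn_def by (simp add: mult.commute)

lemma norm_sq_vec: "(norm (u::complex^'d))^2 = (\<Sum>i\<in>UNIV. (cmod (u$i))\<^sup>2)"
  unfolding norm_vec_def L2_set_def by (simp add: sum_nonneg)

lemma inn_self: "inn u u = of_real ((norm u)^2)"
proof -
  have *: "\<And>z::complex. cnj z * z = (of_real (cmod z))^2" by (simp add: complex_norm_square[symmetric] mult.commute)
  show ?thesis unfolding inn_def norm_sq_vec of_real_sum by (simp add: *)
qed

lemma mult_if01: "(f::complex) * (if P then 1 else 0) = (if P then f else 0)" by simp
lemma mult_if01': "(if P then 1 else 0) * (f::complex) = (if P then f else 0)" by simp

lemma B_axis: "B X (axis i 1) (axis j 1) = X $ i $ j"
proof -
  have a: "(\<Sum>l\<in>UNIV. cnj (axis i 1 $ k) * X$k$l * axis j 1 $ l) = (if k = i then X$k$j else 0)" for k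
    by (cases "k = i") (simp_all add: axis_def mult_if01)
  show ?thesis unfolding B_def a by simp
qed

lemma B_zero: "B X 0 0 = 0"
  unfolding B_def by simp

lemma psd_B: "psd X \<longleftrightarrow> hermitian X \<and> (\<forall>v. 0 \<le> Re (B X v v))"
  unfolding psd_def B_def by simp

lemma herm_B_real: "hermitian X \<Longrightarrow> of_real (Re (B X v v)) = B X v v"
proof -
  assume h: "hermitian X"
  have "Im (B X v v) = 0" using B_herm[OF h, of v v] by (metis cnj.simps(2) neg_equal_zero)
  then show ?thesis by (simp add: complex_eq_iff)
qed

lemma hermitian_add: assumes "hermitian X" "hermitian Y" shows "hermitian (X + Y)"
  unfolding hermitian_def
proof (intro allI)
  fix i j
  have "X$i$j = cnj(X$j$i)" "Y$i$j = cnj(Y$j$i)" using assms unfolding hermitian_def by blast+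
  then show "(X+Y)$i$j = cnj((X+Y)$j$i)" by simp
qed
lemma hermitian_diff: assumes "hermitian X" "hermitian Y" shows "hermitian (X - Y)"
  unfolding hermitian_def
proof (intro allI)
  fix i j
  have "X$i$j = cnj(X$j$i)" "Y$i$j = cnj(Y$j$i)" using assms unfolding hermitian_def by blast+
  then show "(X-Y)$i$j = cnj((X-Y)$j$i)" by simp
qed
lemma hermitian_scaleR: assumes "hermitian X" shows "hermitian (c *\<^sub>R X)"
  unfolding hermitian_def
proof (intro allI)
  fix i j
  have "X$i$j = cnj(X$j$i)" using assms unfolding hermitian_def by blast
  then show "(c *\<^sub>R X)$i$j = cnj((c *\<^sub>R X)$j$i)" unfolding vector_scaleR_component by (simp add: scaleR_conv_of_real)
qed
lemma hermitian_mat1: "hermitian (mat 1)"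
  unfolding hermitian_def mat_def by simp
lemma hermitian_zero: "hermitian 0"
  unfolding hermitian_def by simp

lemma mtrace_add: "mtrace (X + Y) = mtrace X + mtrace Y"
  unfolding mtrace_def by (simp add: sum.distrib)
lemma mtrace_diff: "mtrace (X - Y) = mtrace X - mtrace Y"
  unfolding mtrace_def by (simp add: sum_subtractf)
lemma mtrace_scaleR: "mtrace (c *\<^sub>R X) = of_real c * mtrace X"
  unfolding mtrace_def vector_scaleR_component by (simp add: scaleR_conv_of_real sum_distrib_left)

lemma B_sigma: "B (\<chi> i j. \<psi> $ i * cnj (\<psi> $ j)) v v = cnj (inn \<psi> v) * inn \<psi> v"
  unfolding B_def inn_def
  by (simp add: sum_product algebra_simps)

lemma real_quad_lemma:
  fixes c d :: real
  assumes "\<And>t. 0 \<le> 2*t*c + t^2*d"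
  shows "c = 0"
proof -
  have d: "0 \<le> d" using assms[of 1] assms[of "-1"] by simp
  define t where "t = -c/(d+1)"
  have td: "t*(d+1) = -c" unfolding t_def using d by simp
  have "0 \<le> (2*t*c + t^2*d) * (d+1)^2" using assms[of t] by simp
  also have "(2*t*c + t^2*d) * (d+1)^2 = 2*c*(t*(d+1))*(d+1) + (t*(d+1))^2 * d"
    by (simp add: algebra_simps power2_eq_square)
  also have "\<dots> = - (c^2*(d+2))" unfolding td by (simp add: algebra_simps power2_eq_square)
  finally have "c^2*(d+2) \<le> 0" by simp
  moreover have "0 \<le> c^2*(d+2)" using d by simp
  ultimately have "c^2*(d+2) = 0" by simp
  then show ?thesis using d by simp
qed

lemma first_order:
  assumes h: "hermitian Y" and p: "\<forall>v. 0 \<le> Re (B Y v v)" and z: "B Y q q = 0"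
  shows "B Y q w = 0"
proof -
  have key: "Re (B Y q w') = 0" for w'
  proof (rule real_quad_lemma[of _ "Re (B Y w' w')"])
    fix t :: real
    have "0 \<le> Re (B Y (lc 1 q (of_real t) w') (lc 1 q (of_real t) w'))" using p by blast
    also have "\<dots> = 2*t* Re (B Y q w') + t^2 * Re (B Y w' w')"
      unfolding B_expand using z B_herm[OF h, of q w']
      by (simp add: power2_eq_square)
    finally show "0 \<le> 2*t* Re (B Y q w') + t^2 * Re (B Y w' w')" .
  qed
  have "Re (B Y q (lc \<i> w 0 w)) = 0" by (rule key)
  then have "Im (B Y q w) = 0" by (simp add: B_lc_right)
  moreover have "Re (B Y q w) = 0" by (rule key)
  ultimately show ?thesis by (simp add: complex_eq_iff)
qed

lemma psd_trace0:
  assumes h: "hermitian X" and p: "\<forall>v. 0 \<le> Re (B X v v)" and t: "mtrace X = 0"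
  shows "X = 0"
proof -
  have diag_real: "X$i$i = of_real (Re (X$i$i))" for i
  proof -
    have "cnj (X$i$i) = X$i$i" by (rule herm_cnj[OF h])
    then have "Im (X$i$i) = 0" by (metis cnj.simps(2) neg_equal_zero)
    then show ?thesis by (simp add: complex_eq_iff)
  qed
  have nn: "0 \<le> Re (X$i$i)" for i using p[rule_format, of "axis i 1"] by (simp add: B_axis)
  have "(\<Sum>i\<in>UNIV. Re (X$i$i)) = Re (mtrace X)" unfolding mtrace_def by simp
  then have "(\<Sum>i\<in>UNIV. Re (X$i$i)) = 0" using t by simp
  then have "\<forall>i\<in>UNIV. Re (X$i$i) = 0" using nn by (simp add: sum_nonneg_eq_0_iff)
  then have "B X (axis i 1) (axis i 1) = 0" for i using diag_real[of i] by (simp add: B_axis)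
  then have "B X (axis i 1) (axis j 1) = 0" for i j using first_order[OF h p] by blast
  then show ?thesis by (simp add: B_axis vec_eq_iff)
qed


definition nd :: "complex^'d^'d \<Rightarrow> bool" where
  "nd X \<longleftrightarrow> (\<forall>u w. \<exists>p::complex\<times>complex. p \<in> sphere 0 1 \<and>
      0 \<le> Re (B X (lc (fst p) u (snd p) w) (lc (fst p) u (snd p) w)))"

lemma cnj_mult_self: "cnj z * z = of_real ((cmod z)^2)"
  by (metis complex_norm_square mult.commute)

lemma lc_decomp: "v = lc (inn \<psi> v) \<psi> 1 (lc 1 v (- inn \<psi> v) \<psi>)"
  unfolding lc_def by (simp add: vec_eq_iff)

lemma construct:
  fixes X :: "complex^'d^'d"
  assumes h: "hermitian X" and t: "mtrace X = 0" and nz: "X \<noteq> 0" and n: "nd X"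
  shows "\<exists>\<sigma> \<rho> (c::real). c > 0 \<and> pure_state \<sigma> \<and> density_matrix \<rho> \<and> \<rho> - \<sigma> = c *\<^sub>R X"
proof -
  let ?S = "sphere (0::complex^'d) 1"
  have cS: "compact ?S" by simp
  have ne: "?S \<noteq> {}" by simp
  have cont: "continuous_on UNIV (\<lambda>v. Re (B X v v))" unfolding B_def
    by (intro continuous_intros)
  obtain \<psi> where \<psi>S: "\<psi> \<in> ?S" and min\<psi>: "\<forall>v\<in>?S. Re (B X \<psi> \<psi>) \<le> Re (B X v v)"
    using continuous_attains_inf[OF cS ne continuous_on_subset[OF cont]] by auto
  define m where "m = Re (B X \<psi> \<psi>)"
  have lowb: "m * (norm v)^2 \<le> Re (B X v v)" for v
  proof (cases "v = 0")
    case True then show ?thesis by (simp add: B_zero)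
  next
    case False
    define v1 where "v1 = (1/norm v) *\<^sub>R v"
    have "v1 \<in> ?S" using False by (simp add: v1_def)
    then have m1: "m \<le> Re (B X v1 v1)" using min\<psi> m_def by auto
    have "v = norm v *\<^sub>R v1" using False by (simp add: v1_def)
    then have "B X v v = of_real ((norm v)^2) * B X v1 v1" by (metis B_vscaleR)
    then have "Re (B X v v) = (norm v)^2 * Re (B X v1 v1)" by simp
    then show ?thesis using mult_right_mono[OF m1 zero_le_power2[of "norm v"]] by (simp add: mult.commute)
  qed
  have mneg: "m < 0"
  proof (rule ccontr)
    assume "\<not> m < 0"
    then have "\<forall>v. 0 \<le> Re (B X v v)" using lowb
      by (metis not_less mult_nonneg_nonneg zero_le_power2 order_trans)
    then have "X = 0" using psd_trace0[OF h _ t] by blast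
    with nz show False by simp
  qed
  define lam where "lam = -m"
  have lam: "lam > 0" using mneg lam_def by simp
  define Y where "Y = X + lam *\<^sub>R mat 1"
  have hY: "hermitian Y" unfolding Y_def by (intro hermitian_add hermitian_scaleR hermitian_mat1 h)
  have BY: "B Y u v = B X u v + of_real lam * inn u v" for u v
    unfolding Y_def by (simp add: B_add B_scaleR B_mat1)
  have pY: "\<forall>v. 0 \<le> Re (B Y v v)"
  proof
    fix v
    have "Re (B Y v v) = Re (B X v v) + lam * (norm v)^2" using BY[of v v] inn_self[of v] by simp
    then show "0 \<le> Re (B Y v v)" using lowb[of v] lam_def by simp
  qed
  have n\<psi>: "norm \<psi> = 1" using \<psi>S by simp
  have inn\<psi>: "inn \<psi> \<psi> = 1" using inn_self[of \<psi>] n\<psi> by simp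
  have B\<psi>: "B X \<psi> \<psi> = of_real m" using herm_B_real[OF h, of \<psi>] m_def by simp
  have zY: "B Y \<psi> \<psi> = 0" using BY[of \<psi> \<psi>] inn\<psi> B\<psi> lam_def by simp
  have orth: "B Y \<psi> w = 0" for w by (rule first_order[OF hY pY zY])
  have orth2: "B Y w \<psi> = 0" for w using B_herm[OF hY, where w=w and u=\<psi>] orth[of w] by simp
  have BXv: "B X v v = B Y v v - of_real lam * inn v v" for v using BY[of v v] by simp
  have red: "B X (lc a \<psi> b v') (lc a \<psi> b v') = cnj b * b * B X v' v' - of_real lam * (cnj a * a)"
    if o: "inn \<psi> v' = 0" for a b v'
  proof -
    have o2: "inn v' \<psi> = 0" using inn_sym[of v' \<psi>] o by simp
    have "B X (lc a \<psi> b v') (lc a \<psi> b v') = B Y (lc a \<psi> b v') (lc a \<psi> b v') - of_real lam * inn (lc a \<psi> b v') (lc a \<psi> b v')"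
      by (rule BXv)
    also have "B Y (lc a \<psi> b v') (lc a \<psi> b v') = cnj b * b * B Y v' v'"
      unfolding B_expand using zY orth orth2 by simp
    also have "inn (lc a \<psi> b v') (lc a \<psi> b v') = cnj a * a + cnj b * b * inn v' v'"
      unfolding inn_expand using inn\<psi> o o2 by simp
    also have "B Y v' v' = B X v' v' + of_real lam * inn v' v'" by (rule BY)
    also have "cnj b * b * (B X v' v' + of_real lam * inn v' v') - of_real lam * (cnj a * a + cnj b * b * inn v' v')
       = cnj b * b * B X v' v' - of_real lam * (cnj a * a)" by (simp add: algebra_simps)
    finally show ?thesis .
  qed
  have psub: "0 \<le> Re (B X v' v')" if o: "inn \<psi> v' = 0" for v'
  proof (rule ccontr)
    assume neg: "\<not> 0 \<le> Re (B X v' v')"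
    obtain p :: "complex\<times>complex" where pS: "p \<in> sphere 0 1"
      and pp: "0 \<le> Re (B X (lc (fst p) \<psi> (snd p) v') (lc (fst p) \<psi> (snd p) v'))"
      using n unfolding nd_def by blast
    have "norm p = 1" using pS by simp
    then have ab: "(cmod (fst p))^2 + (cmod (snd p))^2 = 1"
      by (metis norm_Pair prod.collapse real_sqrt_eq_1_iff)
    have "Re (B X (lc (fst p) \<psi> (snd p) v') (lc (fst p) \<psi> (snd p) v'))
       = (cmod (snd p))^2 * Re (B X v' v') - lam * (cmod (fst p))^2"
      unfolding red[OF o] cnj_mult_self by simp
    with pp have *: "0 \<le> (cmod (snd p))^2 * Re (B X v' v') - lam * (cmod (fst p))^2" by simp
    show False
    proof (cases "cmod (snd p) = 0")
      case True
      then show False using * ab lam by simp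
    next
      case False
      then have "0 < (cmod (snd p))^2" by simp
      then have "(cmod (snd p))^2 * Re (B X v' v') < 0" using neg by (simp add: mult_pos_neg)
      moreover have "0 \<le> lam * (cmod (fst p))^2" using lam by simp
      ultimately show False using * by linarith
    qed
  qed
  define \<sigma> where "\<sigma> = (\<chi> i j. \<psi>$i * cnj (\<psi>$j))"
  define \<rho> where "\<rho> = (1/lam) *\<^sub>R X + \<sigma>"
  have pure: "pure_state \<sigma>" unfolding pure_state_def \<sigma>_def
    using n\<psi> norm_sq_vec[of \<psi>] by auto
  have h\<sigma>: "hermitian \<sigma>" unfolding hermitian_def \<sigma>_def by simp
  have h\<rho>: "hermitian \<rho>" unfolding \<rho>_def by (intro hermitian_add hermitian_scaleR h h\<sigma>)
  have B\<rho>: "0 \<le> Re (B \<rho> v v)" for v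
  proof -
    define \<alpha> where "\<alpha> = inn \<psi> v"
    define v' where "v' = lc 1 v (- \<alpha>) \<psi>"
    have o: "inn \<psi> v' = 0" unfolding v'_def \<alpha>_def by (simp add: inn_lc_right inn\<psi>)
    have vv: "v = lc \<alpha> \<psi> 1 v'" unfolding v'_def \<alpha>_def by (rule lc_decomp)
    have "B X v v = B X v' v' - of_real lam * (cnj \<alpha> * \<alpha>)"
      using red[OF o, of \<alpha> 1] vv by simp
    then have rX: "Re (B X v v) = Re (B X v' v') - lam * (cmod \<alpha>)^2" by (simp add: cnj_mult_self)
    have "B \<rho> v v = of_real (1/lam) * B X v v + cnj \<alpha> * \<alpha>"
      unfolding \<rho>_def \<sigma>_def by (simp add: B_add B_scaleR B_sigma \<alpha>_def)
    then have "Re (B \<rho> v v) = (1/lam) * Re (B X v v) + (cmod \<alpha>)^2"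
      by (simp add: cnj_mult_self)
    also have "\<dots> = (1/lam) * (Re (B X v' v') - lam * (cmod \<alpha>)^2) + (cmod \<alpha>)^2" using rX by simp
    also have "\<dots> = (1/lam) * Re (B X v' v')" using lam by (simp add: field_simps)
    finally have "Re (B \<rho> v v) = (1/lam) * Re (B X v' v')" .
    then show ?thesis using psub[OF o] lam by simp
  qed
  have tr\<sigma>: "mtrace \<sigma> = 1" unfolding \<sigma>_def mtrace_def using inn\<psi>
    by (simp add: inn_def mult.commute)
  have dens: "density_matrix \<rho>" unfolding density_matrix_def psd_B
    using h\<rho> B\<rho> tr\<sigma> t by (simp add: \<rho>_def mtrace_add mtrace_scaleR)
  have "\<rho> - \<sigma> = (1/lam) *\<^sub>R X" unfolding \<rho>_def by simp
  then show ?thesis using pure dens lam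
    by (intro exI[of _ \<sigma>] exI[of _ \<rho>] exI[of _ "1/lam"]) simp
qed

lemma pure_nd:
  fixes \<sigma> \<rho> :: "complex^'d^'d"
  assumes ps: "pure_state \<sigma>" and dm: "density_matrix \<rho>"
  shows "nd (\<rho> - \<sigma>)"
  unfolding nd_def
proof (intro allI)
  fix u w :: "complex^'d"
  obtain \<psi> where \<sigma>: "\<sigma> = (\<chi> i j. \<psi> $ i * cnj (\<psi> $ j))"
    using ps unfolding pure_state_def by blast
  have p\<rho>: "0 \<le> Re (B \<rho> v v)" for v using dm unfolding density_matrix_def psd_B by blast
  have "\<exists>p::complex\<times>complex. p \<in> sphere 0 1 \<and> fst p * inn \<psi> u + snd p * inn \<psi> w = 0"
  proof (cases "inn \<psi> w = 0 \<and> inn \<psi> u = 0")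
    case True then show ?thesis by (intro exI[of _ "(1,0)"]) simp
  next
    case False
    define q :: "complex\<times>complex" where "q = (inn \<psi> w, - inn \<psi> u)"
    have "q \<noteq> 0" using False by (auto simp: q_def zero_prod_def)
    then have "norm q \<noteq> 0" by simp
    have n1: "(1/norm q) *\<^sub>R q \<in> sphere 0 1" using \<open>norm q \<noteq> 0\<close> by simp
    have z: "fst ((1/norm q) *\<^sub>R q) * inn \<psi> u + snd ((1/norm q) *\<^sub>R q) * inn \<psi> w = 0"
      by (simp add: q_def algebra_simps)
    show ?thesis using n1 z by blast
  qed
  then obtain p :: "complex\<times>complex" where pS: "p \<in> sphere 0 1"
    and pz: "fst p * inn \<psi> u + snd p * inn \<psi> w = 0" by blast
  let ?z = "lc (fst p) u (snd p) w"
  have "inn \<psi> ?z = 0" using pz by (simp add: inn_lc_right)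
  then have "B \<sigma> ?z ?z = 0" unfolding \<sigma> B_sigma by simp
  then have "Re (B (\<rho> - \<sigma>) ?z ?z) = Re (B \<rho> ?z ?z)" by (simp add: B_diff)
  then have "0 \<le> Re (B (\<rho> - \<sigma>) ?z ?z)" using p\<rho>[of ?z] by simp
  then show "\<exists>p::complex\<times>complex. p \<in> sphere 0 1 \<and> 0 \<le> Re (B (\<rho> - \<sigma>) (lc (fst p) u (snd p) w) (lc (fst p) u (snd p) w))"
    using pS by blast
qed



lemma sub_sum_bound:
  fixes N :: "'a::real_vector \<Rightarrow> real"
  assumes S0: "0 \<in> S" and Sadd: "\<forall>x\<in>S. \<forall>y\<in>S. x + y \<in> S" and Ssc: "\<forall>c. \<forall>x\<in>S. c *\<^sub>R x \<in> S"
    and tri: "\<forall>x\<in>S. \<forall>y\<in>S. N (x+y) \<le> N x + N y"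
    and hom: "\<forall>c. \<forall>x\<in>S. N (c *\<^sub>R x) = \<bar>c\<bar> * N x"
    and fin: "finite A" and vS: "\<forall>b\<in>A. v b \<in> S"
  shows "(\<Sum>b\<in>A. c b *\<^sub>R v b) \<in> S \<and> N (\<Sum>b\<in>A. c b *\<^sub>R v b) \<le> (\<Sum>b\<in>A. \<bar>c b\<bar> * N (v b))"
  using fin vS
proof (induction A rule: finite_induct)
  case empty
  have "N 0 = 0" using hom S0 by (metis abs_zero mult_zero_left scale_zero_left)
  then show ?case using S0 by simp
next
  case (insert a A)
  have s1: "c a *\<^sub>R v a \<in> S" using insert Ssc by simp
  have s2: "(\<Sum>b\<in>A. c b *\<^sub>R v b) \<in> S" and ih: "N (\<Sum>b\<in>A. c b *\<^sub>R v b) \<le> (\<Sum>b\<in>A. \<bar>c b\<bar> * N (v b))"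
    using insert by auto
  have eq: "(\<Sum>b\<in>insert a A. c b *\<^sub>R v b) = c a *\<^sub>R v a + (\<Sum>b\<in>A. c b *\<^sub>R v b)"
    using insert by simp
  have "N (c a *\<^sub>R v a + (\<Sum>b\<in>A. c b *\<^sub>R v b)) \<le> N (c a *\<^sub>R v a) + N (\<Sum>b\<in>A. c b *\<^sub>R v b)"
    using tri s1 s2 by blast
  also have "\<dots> \<le> \<bar>c a\<bar> * N (v a) + (\<Sum>b\<in>A. \<bar>c b\<bar> * N (v b))"
    using hom insert ih by simp
  finally show ?case using insert eq s1 s2 Sadd by simp
qed

definition ct :: "complex^'d^'d \<Rightarrow> complex^'d^'d" where
  "ct X = (\<chi> i j. cnj (X$j$i))"

definition hb :: "complex^'d^'d \<Rightarrow> complex^'d^'d" where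
  "hb X = (1/2) *\<^sub>R (X + ct X)"

lemma linear_ct: "linear ct"
  by (rule linearI) (simp_all add: ct_def vec_eq_iff)

lemma herm_ct: "hermitian X \<Longrightarrow> ct X = X"
  unfolding ct_def by (simp add: vec_eq_iff herm_cnj)

lemma herm_hb: "hermitian (hb X)"
  unfolding hb_def
proof (rule hermitian_scaleR)
  show "hermitian (X + ct X)" unfolding hermitian_def ct_def by simp
qed

lemma herm_repr:
  assumes h: "hermitian X"
  shows "X = (\<Sum>b\<in>Basis. (X \<bullet> b) *\<^sub>R hb b)"
proof -
  have r: "(\<Sum>b\<in>Basis. (X \<bullet> b) *\<^sub>R b) = X" by (rule euclidean_representation)
  have "ct X = (\<Sum>b\<in>Basis. (X \<bullet> b) *\<^sub>R ct b)"
    using linear_sum[OF linear_ct, of "\<lambda>b. (X \<bullet> b) *\<^sub>R b" Basis] r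
    by (simp add: linear_scale[OF linear_ct] o_def)
  then have c: "(\<Sum>b\<in>Basis. (X \<bullet> b) *\<^sub>R ct b) = X" using herm_ct[OF h] by simp
  have "(\<Sum>b\<in>Basis. (X \<bullet> b) *\<^sub>R hb b) = (1/2) *\<^sub>R ((\<Sum>b\<in>Basis. (X \<bullet> b) *\<^sub>R b) + (\<Sum>b\<in>Basis. (X \<bullet> b) *\<^sub>R ct b))"
    unfolding hb_def by (simp add: scaleR_sum_right sum.distrib scaleR_add_right)
  also have "\<dots> = X" unfolding r c by (simp add: scaleR_add_left[symmetric])
  finally show ?thesis by simp
qed

lemma hn_facts:
  assumes "herm_norm N"
  shows "\<forall>x\<in>{X. hermitian X}. \<forall>y\<in>{X. hermitian X}. N (x+y) \<le> N x + N y"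
    and "\<forall>c. \<forall>x\<in>{X. hermitian X}. N (c *\<^sub>R x) = \<bar>c\<bar> * N x"
    and "0 \<in> {X. hermitian X}" and "\<forall>x\<in>{X. hermitian X}. \<forall>y\<in>{X. hermitian X}. x + y \<in> {X. hermitian X}"
    and "\<forall>c. \<forall>x\<in>{X. hermitian X}. c *\<^sub>R x \<in> {X. hermitian X}"
  using assms unfolding herm_norm_def by (auto intro: hermitian_zero hermitian_add hermitian_scaleR)

lemma N1_upper:
  assumes N: "herm_norm N"
  shows "\<exists>C\<ge>0. \<forall>X. hermitian X \<longrightarrow> N X \<le> C * norm X"
proof -
  define C where "C = (\<Sum>b\<in>(Basis::(complex^'a^'a) set). N (hb b))"
  have Nnn: "\<forall>X. hermitian X \<longrightarrow> 0 \<le> N X" using N unfolding herm_norm_def by blast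
  have C0: "C \<ge> 0" unfolding C_def by (intro sum_nonneg) (simp add: Nnn herm_hb)
  have "N X \<le> C * norm X" if h: "hermitian X" for X :: "complex^'a^'a"
  proof -
    have "N (\<Sum>b\<in>Basis. (X \<bullet> b) *\<^sub>R hb b) \<le> (\<Sum>b\<in>Basis. \<bar>X \<bullet> b\<bar> * N (hb b))"
      using sub_sum_bound[OF hn_facts(3,4,5,1,2)[OF N], of Basis hb "\<lambda>b. X \<bullet> b"] herm_hb by auto
    also have "\<dots> \<le> (\<Sum>b\<in>Basis. norm X * N (hb b))"
      by (intro sum_mono mult_right_mono Basis_le_norm) (auto simp: Nnn herm_hb)
    also have "\<dots> = C * norm X" unfolding C_def by (simp add: sum_distrib_left mult.commute)
    finally show ?thesis using herm_repr[OF h] by simp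
  qed
  then show ?thesis using C0 by blast
qed

lemma N2_upper:
  fixes N :: "'a::euclidean_space \<Rightarrow> real"
  assumes N: "vec_norm N"
  shows "\<exists>C\<ge>0. \<forall>x. N x \<le> C * norm x"
proof -
  define C where "C = (\<Sum>b\<in>(Basis::'a set). N b)"
  have Nnn: "\<forall>x. 0 \<le> N x" using N unfolding vec_norm_def by blast
  have C0: "C \<ge> 0" unfolding C_def using Nnn by (simp add: sum_nonneg)
  have "N x \<le> C * norm x" for x
  proof -
    have "N (\<Sum>b\<in>Basis. (x \<bullet> b) *\<^sub>R b) \<le> (\<Sum>b\<in>Basis. \<bar>x \<bullet> b\<bar> * N b)"
      using sub_sum_bound[of UNIV N Basis "\<lambda>b. b" "\<lambda>b. x \<bullet> b"] N unfolding vec_norm_def by auto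
    also have "\<dots> \<le> (\<Sum>b\<in>Basis. norm x * N b)"
      by (intro sum_mono mult_right_mono Basis_le_norm) (auto simp: Nnn)
    also have "\<dots> = C * norm x" unfolding C_def by (simp add: sum_distrib_left mult.commute)
    finally show ?thesis by (simp add: euclidean_representation)
  qed
  then show ?thesis using C0 by blast
qed

lemma lip_cont:
  fixes N :: "'a::real_normed_vector \<Rightarrow> real"
  assumes L: "\<forall>x\<in>S. \<forall>y\<in>S. \<bar>N x - N y\<bar> \<le> C * norm (x - y)" and C: "C \<ge> 0"
  shows "continuous_on S N"
  unfolding continuous_on_iff
proof (intro ballI allI impI)
  fix x e assume x: "x \<in> S" and e: "(0::real) < e"
  show "\<exists>d>0. \<forall>x'\<in>S. dist x' x < d \<longrightarrow> dist (N x') (N x) < e"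
  proof (intro exI[of _ "e/(C+1)"] conjI ballI impI)
    show "0 < e/(C+1)" using e C by simp
    fix x' assume x': "x' \<in> S" and d: "dist x' x < e/(C+1)"
    have "dist (N x') (N x) \<le> C * dist x' x" using L x x' by (simp add: dist_real_def dist_norm)
    also have "\<dots> \<le> C * (e/(C+1))" using mult_left_mono[OF less_imp_le[OF d] C] .
    also have "\<dots> < e" using e C by (simp add: field_simps)
    finally show "dist (N x') (N x) < e" .
  qed
qed

lemma N1_cont:
  assumes N: "herm_norm N"
  shows "continuous_on {X. hermitian X} N"
proof -
  obtain C where C: "C \<ge> 0" "\<forall>X. hermitian X \<longrightarrow> N X \<le> C * norm X" using N1_upper[OF N] by blast
  have tri: "\<forall>X Y. hermitian X \<longrightarrow> hermitian Y \<longrightarrow> N (X + Y) \<le> N X + N Y"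
    and hom: "\<forall>c X. hermitian X \<longrightarrow> N (c *\<^sub>R X) = \<bar>c\<bar> * N X" using N unfolding herm_norm_def by blast+
  have "\<bar>N X - N Y\<bar> \<le> C * norm (X - Y)" if hX: "hermitian X" and hY: "hermitian Y" for X Y
  proof -
    have hd: "hermitian (X - Y)" using hX hY by (rule hermitian_diff)
    have "N X \<le> N Y + N (X - Y)" using tri hY hd by (metis add.commute diff_add_cancel)
    moreover have "N Y \<le> N X + N (Y - X)" using tri hX hermitian_diff[OF hY hX]
      by (metis add.commute diff_add_cancel)
    moreover have "N (Y - X) = N (X - Y)"
    proof -
      have "N ((-1) *\<^sub>R (X - Y)) = \<bar>-1\<bar> * N (X - Y)" using hom hd by blast
      moreover have "(-1) *\<^sub>R (X - Y) = Y - X" by simp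
      ultimately show ?thesis by simp
    qed
    moreover have "N (X - Y) \<le> C * norm (X - Y)" using C hd by blast
    ultimately show ?thesis by linarith
  qed
  then show ?thesis by (intro lip_cont[OF _ C(1)]) auto
qed

lemma N2_cont:
  fixes N :: "'a::euclidean_space \<Rightarrow> real"
  assumes N: "vec_norm N"
  shows "continuous_on UNIV N"
proof -
  obtain C where C: "C \<ge> 0" "\<forall>x. N x \<le> C * norm x" using N2_upper[OF N] by blast
  have tri: "\<forall>x y. N (x + y) \<le> N x + N y"
    and hom: "\<forall>c x. N (c *\<^sub>R x) = \<bar>c\<bar> * N x" using N unfolding vec_norm_def by blast+
  have "\<bar>N x - N y\<bar> \<le> C * norm (x - y)" for x y
  proof -
    have "N x \<le> N y + N (x - y)" using tri by (metis add.commute diff_add_cancel)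
    moreover have "N y \<le> N x + N (y - x)" using tri
      by (metis add.commute diff_add_cancel)
    moreover have "N (y - x) = N (x - y)"
    proof -
      have "N ((-1) *\<^sub>R (x - y)) = \<bar>-1\<bar> * N (x - y)" using hom by blast
      moreover have "(-1) *\<^sub>R (x - y) = y - x" by simp
      ultimately show ?thesis by simp
    qed
    moreover have "N (x - y) \<le> C * norm (x - y)" using C by blast
    ultimately show ?thesis by linarith
  qed
  then show ?thesis by (intro lip_cont[OF _ C(1)]) auto
qed

lemma closed_herm: "closed {X::complex^'d^'d. hermitian X}"
  unfolding hermitian_def
  by (intro closed_Collect_all closed_Collect_eq continuous_intros)

lemma N1_lower:
  fixes N :: "complex^'d^'d \<Rightarrow> real"
  assumes N: "herm_norm N"
  shows "\<exists>c>0. \<forall>X. hermitian X \<longrightarrow> c * norm X \<le> N X"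
proof -
  have tri: "\<forall>X Y. hermitian X \<longrightarrow> hermitian Y \<longrightarrow> N (X + Y) \<le> N X + N Y"
    and hom: "\<forall>c X. hermitian X \<longrightarrow> N (c *\<^sub>R X) = \<bar>c\<bar> * N X"
    and nn: "\<forall>X. hermitian X \<longrightarrow> 0 \<le> N X"
    and def: "\<forall>X. hermitian X \<longrightarrow> N X = 0 \<longrightarrow> X = 0" using N unfolding herm_norm_def by blast+
  let ?K = "{X::complex^'d^'d. hermitian X} \<inter> sphere 0 1"
  have cK: "compact ?K" by (intro closed_Int_compact closed_herm compact_sphere)
  show ?thesis
  proof (cases "?K = {}")
    case True
    have z0: "X = 0" if h: "hermitian X" for X :: "complex^'d^'d"
    proof (rule ccontr)
      assume "X \<noteq> 0"
      then have "(1/norm X) *\<^sub>R X \<in> ?K" using hermitian_scaleR[OF h] by simp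
      then show False using True by blast
    qed
    have "1 * norm X \<le> N X" if h: "hermitian X" for X :: "complex^'d^'d"
      using z0[OF h] nn h by simp
    then show ?thesis by (intro exI[of _ 1]) auto
  next
    case False
    obtain X0 where X0: "X0 \<in> ?K" and m: "\<forall>Y\<in>?K. N X0 \<le> N Y"
      using continuous_attains_inf[OF cK False continuous_on_subset[OF N1_cont[OF N]]] by auto
    have pos: "N X0 > 0" using X0 nn def by (metis IntD1 IntD2 mem_Collect_eq mem_sphere_0 norm_zero
        order_le_less zero_neq_one)
    have "N X0 * norm X \<le> N X" if h: "hermitian X" for X :: "complex^'d^'d"
    proof (cases "X = 0")
      case True then show ?thesis using nn h by simp
    next
      case False
      have "(1/norm X) *\<^sub>R X \<in> ?K" using False hermitian_scaleR[OF h] by simp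
      then have "N X0 \<le> N ((1/norm X) *\<^sub>R X)" using m by blast
      also have "\<dots> = N X / norm X" using hom h by simp
      finally show ?thesis using False by (simp add: pos_le_divide_eq)
    qed
    then show ?thesis using pos by blast
  qed
qed

lemma meas_entry: "meas_map Q X $ i $ j = Re (\<Sum>k\<in>UNIV. \<Sum>l\<in>UNIV. X$k$l * Q i j $l$k)"
  unfolding meas_map_def mtrace_def matrix_matrix_mult_def by simp

lemma linear_meas: "linear (meas_map Q)"
proof (rule linearI)
  show "meas_map Q (X + Y) = meas_map Q X + meas_map Q Y" for X Y
    by (simp add: vec_eq_iff meas_entry algebra_simps sum.distrib)
  show "meas_map Q (c *\<^sub>R X) = c *\<^sub>R meas_map Q X" for c X
    unfolding vec_eq_iff
  proof (intro allI)
    fix i j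
    show "meas_map Q (c *\<^sub>R X) $ i $ j = (c *\<^sub>R meas_map Q X) $ i $ j"
      unfolding meas_entry vector_scaleR_component
      by (simp add: scaleR_conv_of_real sum_distrib_left mult.assoc)
  qed
qed

lemma op_norm_bound:
  fixes N1 :: "complex^'d^'d \<Rightarrow> real" and N2 :: "'b::euclidean_space \<Rightarrow> real"
  assumes N1: "herm_norm N1" and N2: "vec_norm N2" and lin: "linear T"
    and h: "hermitian X" and pos: "N1 X > 0"
  shows "N2 (T X) \<le> op_norm N1 N2 T * N1 X"
proof -
  obtain c where c: "c > 0" "\<forall>X. hermitian X \<longrightarrow> c * norm X \<le> N1 X" using N1_lower[OF N1] by blast
  obtain C2 where C2: "C2 \<ge> 0" "\<forall>y. N2 y \<le> C2 * norm y" using N2_upper[OF N2] by blast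
  have bl: "bounded_linear T" using lin linear_conv_bounded_linear by blast
  obtain K where K: "K > 0" "\<forall>x. norm (T x) \<le> norm x * K" using bounded_linear.pos_bounded[OF bl] by blast
  have hom1: "\<forall>c X. hermitian X \<longrightarrow> N1 (c *\<^sub>R X) = \<bar>c\<bar> * N1 X" using N1 unfolding herm_norm_def by blast
  have hom2: "\<forall>c x. N2 (c *\<^sub>R x) = \<bar>c\<bar> * N2 x" using N2 unfolding vec_norm_def by blast
  have bdd: "bdd_above {N2 (T Y) |Y. hermitian Y \<and> N1 Y \<le> 1}"
  proof (rule bdd_aboveI)
    fix r assume "r \<in> {N2 (T Y) |Y. hermitian Y \<and> N1 Y \<le> 1}"
    then obtain Y where Y: "r = N2 (T Y)" "hermitian Y" "N1 Y \<le> 1" by blast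
    have "c * norm Y \<le> 1" using c Y by (meson order_trans)
    then have nY: "norm Y \<le> 1/c" using c by (simp add: field_simps)
    have "r \<le> C2 * norm (T Y)" using C2 Y by simp
    also have "\<dots> \<le> C2 * (norm Y * K)" using K C2 by (simp add: mult_left_mono)
    also have "\<dots> \<le> C2 * ((1/c) * K)" using nY K C2 by (intro mult_left_mono mult_right_mono) auto
    finally show "r \<le> C2 * ((1/c) * K)" .
  qed
  define Y where "Y = (1/N1 X) *\<^sub>R X"
  have hY: "hermitian Y" unfolding Y_def by (rule hermitian_scaleR[OF h])
  have nY: "N1 Y = 1" unfolding Y_def using hom1 h pos by simp
  have "T Y = (1/N1 X) *\<^sub>R T X" unfolding Y_def by (rule linear_scale[OF lin])
  then have "N2 (T Y) = N2 (T X) / N1 X" using hom2 pos by simp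
  moreover have "N2 (T Y) \<le> op_norm N1 N2 T" unfolding op_norm_def
    using hY nY by (intro cSup_upper[OF _ bdd]) auto
  ultimately show ?thesis using pos by (simp add: pos_divide_le_eq)
qed

lemma closed_nd: "closed {X::complex^'d^'d. nd X}"
proof -
  define g where "g = (\<lambda>u w (z::(complex\<times>complex)\<times>(complex^'d^'d)).
     Re (B (snd z) (lc (fst (fst z)) u (snd (fst z)) w) (lc (fst (fst z)) u (snd (fst z)) w)))"
  have cg: "continuous_on UNIV (g u w)" for u w
    unfolding g_def B_def lc_def by (simp; intro continuous_intros)
  have cl: "closed {X. \<exists>p. p \<in> sphere (0::complex\<times>complex) 1 \<and> (p, X) \<in> {z. 0 \<le> g u w z}}" for u w
    by (intro closed_compact_projection compact_sphere closed_Collect_le continuous_on_const cg)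
  have "{X::complex^'d^'d. nd X} = (\<Inter>u. \<Inter>w. {X. \<exists>p. p \<in> sphere (0::complex\<times>complex) 1 \<and> (p, X) \<in> {z. 0 \<le> g u w z}})"
    unfolding nd_def g_def by auto
  then show ?thesis using cl by (simp add: closed_INT)
qed



lemma nd_scale: "nd X \<Longrightarrow> 0 \<le> c \<Longrightarrow> nd (c *\<^sub>R X)"
  unfolding nd_def B_scaleR by (simp; meson mult_nonneg_nonneg)

lemma pure_herm: "pure_state \<sigma> \<Longrightarrow> hermitian \<sigma>"
  unfolding pure_state_def hermitian_def by auto

lemma pure_trace: assumes "pure_state \<sigma>" shows "mtrace \<sigma> = 1"
proof -
  obtain \<psi> where n: "(\<Sum>i\<in>UNIV. (cmod (\<psi> $ i))\<^sup>2) = 1" and s: "\<sigma> = (\<chi> i j. \<psi> $ i * cnj (\<psi> $ j))"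
    using assms unfolding pure_state_def by blast
  have "mtrace \<sigma> = inn \<psi> \<psi>" unfolding s mtrace_def inn_def by (simp add: mult.commute)
  also have "\<dots> = 1" using inn_self[of \<psi>] norm_sq_vec[of \<psi>] n by simp
  finally show ?thesis .
qed

theorem theorem2:
  fixes N1 :: "complex^'d^'d \<Rightarrow> real"
    and N2 :: "real^'m^'l \<Rightarrow> real"
    and Q :: "'l::finite \<Rightarrow> 'm::finite \<Rightarrow> complex^'d^'d"
  assumes "herm_norm N1" and "vec_norm N2"
    and "scheme Q" and "determines_pure Q"
  shows "\<exists>\<epsilon>>0. \<forall>Q' :: 'l \<Rightarrow> 'm \<Rightarrow> complex^'d^'d. scheme Q' \<longrightarrow>
           op_norm N1 N2 (\<lambda>X. meas_map Q X - meas_map Q' X) < \<epsilon> \<longrightarrow> determines_pure Q'"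
proof -
  note N1 = assms(1) and N2 = assms(2) and dQ = assms(4)
  have nn1: "\<forall>X. hermitian X \<longrightarrow> 0 \<le> N1 X"
    and def1: "\<forall>X. hermitian X \<longrightarrow> N1 X = 0 \<longrightarrow> X = 0" using N1 unfolding herm_norm_def by blast+
  have nn2: "\<forall>x. 0 \<le> N2 x" and def2: "\<forall>x. N2 x = 0 \<longrightarrow> x = 0" using N2 unfolding vec_norm_def by blast+
  let ?K = "{X::complex^'d^'d. hermitian X \<and> norm X = 1 \<and> mtrace X = 0 \<and> nd X}"
  have K_eq: "?K = {X. hermitian X} \<inter> sphere 0 1 \<inter> {X. mtrace X = 0} \<inter> {X. nd X}" by auto
  have closed_tr: "closed {X::complex^'d^'d. mtrace X = 0}" unfolding mtrace_def
    by (intro closed_Collect_eq continuous_intros)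
  have cK: "compact ?K" unfolding K_eq
    by (intro compact_Int_closed closed_Int_compact closed_herm compact_sphere closed_tr closed_nd)
  have N1pos: "N1 Y > 0" if "Y \<in> ?K" for Y
  proof -
    have "Y \<noteq> 0" using that by auto
    then show ?thesis using that nn1 def1 by (metis (mono_tags, lifting) mem_Collect_eq order_le_less)
  qed
  have blQ: "bounded_linear (meas_map Q)" using linear_meas linear_conv_bounded_linear by blast
  have "\<exists>\<epsilon>>0. \<forall>Y\<in>?K. \<epsilon> * N1 Y \<le> N2 (meas_map Q Y)"
  proof (cases "?K = {}")
    case True then show ?thesis by (intro exI[of _ 1]) auto
  next
    case False
    define f where "f = (\<lambda>Y. N2 (meas_map Q Y) / N1 Y)"
    have c1: "continuous_on ?K (\<lambda>Y. N2 (meas_map Q Y))"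
      by (rule continuous_on_compose2[OF N2_cont[OF N2] linear_continuous_on[OF blQ]]) auto
    have c2: "continuous_on ?K N1"
      by (rule continuous_on_subset[OF N1_cont[OF N1]]) auto
    have nz: "N1 Y \<noteq> 0" if "Y \<in> ?K" for Y using N1pos[OF that] by simp
    have cf: "continuous_on ?K f" unfolding f_def
      by (rule continuous_on_divide[OF c1 c2]) (use nz in blast)
    obtain X0 where X0: "X0 \<in> ?K" and m: "\<forall>Y\<in>?K. f X0 \<le> f Y"
      using continuous_attains_inf[OF cK False cf] by blast
    have "N2 (meas_map Q X0) \<noteq> 0"
    proof
      assume "N2 (meas_map Q X0) = 0"
      have "X0 \<noteq> 0" using X0 by auto
      have z: "meas_map Q X0 = 0" using def2 \<open>N2 (meas_map Q X0) = 0\<close> by blast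
      obtain \<sigma> \<rho> c where c: "c > 0" and ps: "pure_state \<sigma>" and dm: "density_matrix \<rho>"
        and d: "\<rho> - \<sigma> = c *\<^sub>R X0"
        using construct[of X0] X0 \<open>X0 \<noteq> 0\<close> by blast
      have "meas_map Q \<rho> - meas_map Q \<sigma> = meas_map Q (\<rho> - \<sigma>)"
        by (rule linear_diff[OF linear_meas, symmetric])
      also have "\<dots> = c *\<^sub>R meas_map Q X0" unfolding d by (rule linear_scale[OF linear_meas])
      finally have "meas_map Q \<sigma> = meas_map Q \<rho>" using z by simp
      then have "\<rho> = \<sigma>" using dQ ps dm unfolding determines_pure_def by blast
      then have "c *\<^sub>R X0 = 0" using d by simp
      then show False using c X0 by auto
    qed
    then have "N2 (meas_map Q X0) > 0" using nn2[rule_format, of "meas_map Q X0"] by linarith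
    then have fpos: "f X0 > 0" unfolding f_def using N1pos[OF X0] by simp
    have "\<forall>Y\<in>?K. f X0 * N1 Y \<le> N2 (meas_map Q Y)"
    proof
      fix Y assume Y: "Y \<in> ?K"
      have "f X0 \<le> N2 (meas_map Q Y) / N1 Y" using m Y unfolding f_def by blast
      then show "f X0 * N1 Y \<le> N2 (meas_map Q Y)" using N1pos[OF Y] by (simp add: pos_le_divide_eq)
    qed
    then show ?thesis using fpos by blast
  qed
  then obtain \<epsilon> where \<epsilon>: "\<epsilon> > 0" and bnd: "\<forall>Y\<in>?K. \<epsilon> * N1 Y \<le> N2 (meas_map Q Y)" by blast
  show ?thesis
  proof (intro exI[of _ \<epsilon>] conjI allI impI \<epsilon>)
    fix Q' :: "'l \<Rightarrow> 'm \<Rightarrow> complex^'d^'d"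
    assume sch: "scheme Q'" and cl: "op_norm N1 N2 (\<lambda>X. meas_map Q X - meas_map Q' X) < \<epsilon>"
    let ?T = "\<lambda>X. meas_map Q X - meas_map Q' X"
    have linT: "linear ?T"
      by (rule linearI) (simp_all add: linear_add[OF linear_meas] linear_scale[OF linear_meas] algebra_simps scaleR_diff_right)
    show "determines_pure Q'" unfolding determines_pure_def
    proof (intro allI impI)
      fix \<sigma> \<rho> :: "complex^'d^'d"
      assume ps: "pure_state \<sigma>" and dm: "density_matrix \<rho>" and eq: "meas_map Q' \<sigma> = meas_map Q' \<rho>"
      show "\<rho> = \<sigma>"
      proof (rule ccontr)
        assume ne: "\<rho> \<noteq> \<sigma>"
        define X where "X = \<rho> - \<sigma>"
        have Xnz: "X \<noteq> 0" using ne unfolding X_def by simp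
        have hX: "hermitian X" unfolding X_def
          using dm ps pure_herm unfolding density_matrix_def psd_def by (blast intro: hermitian_diff)
        have tX: "mtrace X = 0" unfolding X_def mtrace_diff using pure_trace[OF ps] dm
          unfolding density_matrix_def by simp
        have nX: "nd X" unfolding X_def by (rule pure_nd[OF ps dm])
        define Y where "Y = (1/norm X) *\<^sub>R X"
        have YK: "Y \<in> ?K" unfolding Y_def using Xnz hermitian_scaleR[OF hX] tX nd_scale[OF nX]
          by (simp add: mtrace_scaleR)
        have "meas_map Q' X = 0" unfolding X_def using eq by (simp add: linear_diff[OF linear_meas])
        then have "meas_map Q' Y = 0" unfolding Y_def by (simp add: linear_scale[OF linear_meas])
        then have TY: "?T Y = meas_map Q Y" by simp
        have hY: "hermitian Y" using YK by simp
        have "N2 (?T Y) \<le> op_norm N1 N2 ?T * N1 Y"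
          by (rule op_norm_bound[OF N1 N2 linT hY N1pos[OF YK]])
        also have "\<dots> < \<epsilon> * N1 Y" using cl N1pos[OF YK] by simp
        also have "\<dots> \<le> N2 (meas_map Q Y)" using bnd YK by blast
        finally show False using TY by simp
      qed
    qed
  qed
qed

end
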